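(* Let $\beta\in(0,1)$, $\kappa>0$, and consider the uniform mesh $t_j=j\kappa$, $j=0,1,2,\dots$. Let $\Pi_1$ denote continuous piecewise linear interpolation at the nodes $t_j$ (i.e. $\Pi_1 v(t_j)=v(t_j)$ and $\Pi_1 v$ is linear on each $[t_j,t_{j+1}]$). Then there exists a constant $C$ depending only on $\beta$ such that for all $n\geq1$ \[ \int_0^{t_{n+1}}(t_{n+1}-\tau)^{\beta-1}\left|\Pi_1\tau^{1-\beta}-\tau^{1-\beta}\right|\,d\tau\leq C\kappa^{2-\beta}(t_{n+1}-\kappa)^{\beta-1}, \] where $\Pi_1\tau^{1-\beta}$ denotes the interpolant of the function $\tau\mapsto\tau^{1-\beta}$. *)

theory Defs
  imports "HOL-Analysis.Analysis"
begin

definition pl_interp :: "real \<Rightarrow> (real \<Rightarrow> real) \<Rightarrow> real \<Rightarrow> real" where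
  "pl_interp \<kappa> v \<tau> =
     (let j = real_of_int \<lfloor>\<tau> / \<kappa>\<rfloor>;
          a = j * \<kappa>; b = (j + 1) * \<kappa>
      in v a + (\<tau> - a) / \<kappa> * (v b - v a))"

end

theory Submission imports Defs begin

lemma tan_concave:
  fixes r x y :: real
  assumes r0: "0 \<le> r" and r1: "r \<le> 1" and x: "0 \<le> x" and y: "0 < y"
  shows "x powr r \<le> y powr r + r * y powr (r - 1) * (x - y)"
proof (cases "x = 0")
  case True
  have "y powr (r - 1) * y = y powr r" using y by (simp add: powr_diff)
  hence "r * y powr (r - 1) * (x - y) = - r * y powr r" using True by (simp add: algebra_simps)
  moreover have "r * y powr r \<le> 1 * y powr r" using r1 by (intro mult_right_mono) auto
  moreover have "x powr r = 0" using True by simp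
  ultimately show ?thesis by linarith
next
  case False
  hence xp: "0 < x" using x by simp
  have "(x / y) powr r * 1 powr (1 - r) \<le> r * (x / y) + (1 - r) * 1"
    by (rule Youngs_inequality_0) (use r0 r1 xp y in auto)
  hence h: "x powr r / y powr r \<le> r * (x / y) + (1 - r)" using xp y by (simp add: powr_divide)
  have yr: "0 < y powr r" using y by simp
  have "x powr r \<le> (r * (x / y) + (1 - r)) * y powr r"
    using h yr by (simp add: divide_le_eq)
  also have "\<dots> = y powr r + r * (y powr r / y) * (x - y)"
    using y by (simp add: field_simps)
  also have "y powr r / y = y powr (r - 1)" using y by (simp add: powr_diff)
  finally show ?thesis .
qed

lemma tan_convex_neg:
  fixes b x y :: real
  assumes b: "0 \<le> b" and x: "0 < x" and y: "0 < y"
  shows "y powr (- b) - b * y powr (- b - 1) * (x - y) \<le> x powr (- b)"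
proof -
  define u where "u = x / y"
  have u: "0 < u" using x y by (simp add: u_def)
  have "(u powr (- b)) powr (1 / (1 + b)) * u powr (b / (1 + b))
          \<le> (1 / (1 + b)) * u powr (- b) + (b / (1 + b)) * u"
    by (rule Youngs_inequality_0) (use b u in \<open>auto simp: field_simps\<close>)
  moreover have "(u powr (- b)) powr (1 / (1 + b)) * u powr (b / (1 + b)) = 1"
    using u b by (simp add: powr_powr flip: powr_add)
  ultimately have "1 \<le> (1 / (1 + b)) * u powr (- b) + (b / (1 + b)) * u" by simp
  moreover have "(1 / (1 + b)) * u powr (- b) + (b / (1 + b)) * u = (u powr (- b) + b * u) / (1 + b)"
    by (simp add: add_divide_distrib)
  ultimately have "1 \<le> (u powr (- b) + b * u) / (1 + b)" by simp
  hence "1 + b \<le> u powr (- b) + b * u" using b by (simp add: le_divide_eq)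
  hence h: "1 - b * (u - 1) \<le> u powr (- b)" by (simp add: algebra_simps)
  have yb: "0 < y powr (- b)" using y by simp
  have "y powr (- b) * (1 - b * (u - 1)) \<le> y powr (- b) * u powr (- b)"
    using h yb by simp
  also have "y powr (- b) * u powr (- b) = x powr (- b)"
    using x y by (simp add: u_def powr_divide)
  also have "y powr (- b) * (1 - b * (u - 1)) = y powr (- b) - b * (y powr (- b) / y) * (x - y)"
    using y by (simp add: u_def field_simps)
  also have "y powr (- b) / y = y powr (- b - 1)" using y by (simp add: powr_diff)
  finally show ?thesis .
qed

lemma interp_err:
  fixes k c t :: real
  assumes k: "0 < k" and c0: "0 < c" and c1: "c < 1" and t: "0 \<le> t"
  shows "\<bar>pl_interp k (\<lambda>s. s powr (1 - c)) t - t powr (1 - c)\<bar> \<le> 9 * k^2 * (t + k) powr (-1 - c)"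
proof -
  define j where "j = \<lfloor>t / k\<rfloor>"
  define a where "a = real_of_int j * k"
  have j0: "0 \<le> j" unfolding j_def using t k by simp
  have "real_of_int j \<le> t / k" unfolding j_def by (rule of_int_floor_le)
  hence at: "a \<le> t" unfolding a_def using k by (simp add: le_divide_eq)
  have "t / k < real_of_int j + 1" unfolding j_def by (rule real_of_int_floor_add_one_gt)
  hence ta: "t < a + k" unfolding a_def using k by (simp add: divide_less_eq algebra_simps)
  have pl: "pl_interp k (\<lambda>s. s powr (1 - c)) t
      = a powr (1 - c) + (t - a) / k * ((a + k) powr (1 - c) - a powr (1 - c))"
    unfolding pl_interp_def Let_def a_def j_def by (simp add: algebra_simps)
  have tkpos: "0 < t + k" using t k by simp
  show ?thesis
  proof (cases "j = 0")
    case True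
    hence a0: "a = 0" unfolding a_def by simp
    have pl0: "pl_interp k (\<lambda>s. s powr (1 - c)) t = t / k * k powr (1 - c)"
      using pl a0 by simp
    have tk: "t / k \<le> 1" using ta a0 k by simp
    have p1: "0 \<le> t / k * k powr (1 - c)" using t k by simp
    have p2: "t / k * k powr (1 - c) \<le> 1 * k powr (1 - c)"
      by (rule mult_right_mono) (use tk in auto)
    have p3: "t powr (1 - c) \<le> k powr (1 - c)"
      using ta a0 t c1 by (intro powr_mono2) auto
    have p4: "0 \<le> t powr (1 - c)" by simp
    have diff: "\<bar>pl_interp k (\<lambda>s. s powr (1 - c)) t - t powr (1 - c)\<bar> \<le> k powr (1 - c)"
      unfolding pl0 abs_le_iff using p1 p2 p3 p4 by linarith
    have "(2 * k) powr (-1 - c) \<le> (t + k) powr (-1 - c)"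
      using ta a0 tkpos c0 by (intro powr_mono2') auto
    moreover have "(2 * k) powr (-1 - c) = 2 powr (-1 - c) * k powr (-1 - c)"
      using k by (simp add: powr_mult)
    moreover have "(2::real) powr (-2) \<le> 2 powr (-1 - c)"
      using c1 by (intro powr_mono) auto
    moreover have "(2::real) powr (-2) = 1/4" by (simp add: powr_minus powr_realpow)
    ultimately have q: "1/4 * k powr (-1 - c) \<le> (t + k) powr (-1 - c)"
      by (metis mult_right_mono powr_ge_zero order_trans)
    have "k powr (1 - c) = k^2 * k powr (-1 - c)"
    proof -
      have "k powr (1 - c) = k powr 2 * k powr (-1 - c)"
        using powr_add[of k 2 "-1 - c"] by simp
      also have "k powr 2 = k^2" using k by (simp add: powr_numeral)
      finally show ?thesis .
    qed
    also have "\<dots> = 4 * k^2 * (1/4 * k powr (-1 - c))" by simp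
    also have "\<dots> \<le> 4 * k^2 * (t + k) powr (-1 - c)"
      using q by (intro mult_left_mono) auto
    also have "\<dots> \<le> 9 * k^2 * (t + k) powr (-1 - c)"
      by (intro mult_right_mono) auto
    finally show ?thesis using diff by linarith
  next
    case False
    hence j1: "1 \<le> j" using j0 by simp
    hence ak: "k \<le> a" unfolding a_def using k by simp
    have apos: "0 < a" using ak k by simp
    have tpos: "0 < t" using apos at by simp
    define P where "P = a powr (1 - c)"
    define Q where "Q = (a + k) powr (1 - c)"
    define R where "R = t powr (1 - c)"
    define D where "D = (1 - c) * t powr (1 - c - 1)"
    define L where "L = pl_interp k (\<lambda>s. s powr (1 - c)) t"
    have L: "L = P + (t - a) / k * (Q - P)" unfolding L_def P_def Q_def using pl by simp
    have kL: "k * L = (a + k - t) * P + (t - a) * Q"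
      unfolding L using k by (simp add: field_simps)
    have h1: "P \<le> R + D * (a - t)" unfolding P_def R_def D_def
      using tan_concave[of "1 - c" a t] c0 c1 apos tpos by (simp add: mult.assoc)
    have h2: "Q \<le> R + D * (a + k - t)" unfolding Q_def R_def D_def
      using tan_concave[of "1 - c" "a + k" t] c0 c1 apos tpos k by (simp add: mult.assoc)
    have e1: "(a + k - t) * P \<le> (a + k - t) * (R + D * (a - t))"
      using h1 ta by (intro mult_left_mono) auto
    have e2: "(t - a) * Q \<le> (t - a) * (R + D * (a + k - t))"
      using h2 at by (intro mult_left_mono) auto
    have "(a + k - t) * (R + D * (a - t)) + (t - a) * (R + D * (a + k - t)) = k * R"
      by (simp add: algebra_simps)
    hence "k * L \<le> k * R" using kL e1 e2 by linarith
    hence LR: "L \<le> R" using k by simp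
    define S where "S = (a + k) powr (- c)"
    define A where "A = a powr (- c)"
    have h3: "R \<le> P + (1 - c) * A * (t - a)" unfolding R_def P_def A_def
      using tan_concave[of "1 - c" t a] c0 c1 apos tpos by simp
    have h4: "P \<le> Q + (1 - c) * S * (a - (a + k))" unfolding P_def Q_def S_def
      using tan_concave[of "1 - c" a "a + k"] c0 c1 apos k by simp
    hence "(1 - c) * S * k \<le> Q - P" by (simp add: algebra_simps)
    hence "(t - a) / k * ((1 - c) * S * k) \<le> (t - a) / k * (Q - P)"
      using at k by (intro mult_left_mono) auto
    hence "(t - a) * (1 - c) * S \<le> (t - a) / k * (Q - P)" using k by simp
    hence h5: "P + (t - a) * (1 - c) * S \<le> L" using L by linarith
    have h6: "A - c * a powr (- c - 1) * k \<le> S" unfolding A_def S_def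
      using tan_convex_neg[of c "a + k" a] c0 apos k by simp
    have "R - L \<le> (t - a) * (1 - c) * (A - S)" using h3 h5 by (simp add: algebra_simps)
    also have "\<dots> \<le> (t - a) * (1 - c) * (c * a powr (- c - 1) * k)"
      using h6 at c1 by (intro mult_left_mono) auto
    also have "\<dots> = ((t - a) * ((1 - c) * c)) * (k * a powr (- c - 1))" by simp
    also have "\<dots> \<le> (k * 1) * (k * a powr (- c - 1))"
    proof (intro mult_right_mono mult_mono)
      show "(1 - c) * c \<le> 1" using c0 c1 by (smt (verit) mult_le_one)
    qed (use ta at c0 c1 k in auto)
    also have "\<dots> = k^2 * a powr (-1 - c)"
    proof -
      have e: "a powr (- c - 1) = a powr (-1 - c)" by (rule arg_cong[where f="\<lambda>x. a powr x"]) simp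
      show ?thesis unfolding e by (simp add: power2_eq_square)
    qed
    finally have RL: "R - L \<le> k^2 * a powr (-1 - c)" .
    have "(3 * a) powr (-1 - c) \<le> (t + k) powr (-1 - c)"
      using ta ak tkpos c0 by (intro powr_mono2') auto
    moreover have "(3 * a) powr (-1 - c) = 3 powr (-1 - c) * a powr (-1 - c)"
      using apos by (simp add: powr_mult)
    moreover have "(3::real) powr (-2) \<le> 3 powr (-1 - c)"
      using c1 by (intro powr_mono) auto
    moreover have "(3::real) powr (-2) = 1/9" by (simp add: powr_minus powr_realpow)
    ultimately have q: "1/9 * a powr (-1 - c) \<le> (t + k) powr (-1 - c)"
      by (metis mult_right_mono powr_ge_zero order_trans)
    have "k^2 * a powr (-1 - c) = 9 * k^2 * (1/9 * a powr (-1 - c))" by simp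
    also have "\<dots> \<le> 9 * k^2 * (t + k) powr (-1 - c)"
      using q by (intro mult_left_mono) auto
    finally have "R - L \<le> 9 * k^2 * (t + k) powr (-1 - c)" using RL by linarith
    thus ?thesis using LR unfolding L_def R_def by linarith
  qed
qed

lemma int1:
  fixes k c T :: real
  assumes k: "0 < k" and c: "0 < c" and T: "0 \<le> T"
  shows "((\<lambda>x. (x + k) powr (-1 - c)) has_integral
           ((k powr (- c) - (T + k) powr (- c)) / c)) {0..T}"
proof -
  define G where "G = (\<lambda>x::real. - ((x + k) powr (- c)) / c)"
  have "((\<lambda>x. (x + k) powr (-1 - c)) has_integral (G T - G 0)) {0..T}"
  proof (rule fundamental_theorem_of_calculus)
    fix x assume x: "x \<in> {0..T}"
    have xp: "0 < x + k" using x k by simp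
    have "(G has_real_derivative
             - (- c * (x + k) powr (- c - of_nat 1) * (1 + 0)) / c) (at x)"
      unfolding G_def by (intro derivative_eq_intros DERIV_fun_powr) (use xp c in auto)
    moreover have "- (- c * (x + k) powr (- c - of_nat 1) * (1 + 0)) / c = (x + k) powr (-1 - c)"
    proof -
      have e: "(x + k) powr (- c - 1) = (x + k) powr (-1 - c)"
        by (rule arg_cong[where f="\<lambda>y. (x + k) powr y"]) simp
      show ?thesis using c by (simp add: e)
    qed
    ultimately have "(G has_real_derivative (x + k) powr (-1 - c)) (at x)"
      by simp
    then show "(G has_vector_derivative (x + k) powr (-1 - c)) (at x within {0..T})"
      by (simp add: has_real_derivative_iff_has_vector_derivative has_vector_derivative_at_within)
  qed (use T in auto)
  thus ?thesis by (simp add: G_def algebra_simps diff_divide_distrib)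
qed

lemma int2:
  fixes c T :: real
  assumes c: "0 < c" and T: "0 \<le> T"
  shows "((\<lambda>x. (T - x) powr (c - 1)) has_integral (T powr c / c)) {0..T}"
proof -
  define G where "G = (\<lambda>x::real. - ((T - x) powr c) / c)"
  have "((\<lambda>x. (T - x) powr (c - 1)) has_integral (G T - G 0)) {0..T}"
  proof (rule fundamental_theorem_of_calculus_interior)
    show "continuous_on {0..T} G"
      unfolding G_def using c by (intro continuous_intros continuous_on_powr') auto
    fix x assume x: "x \<in> {0<..<T}"
    have xp: "0 < T - x" using x by simp
    have "(G has_real_derivative
             - (c * (T - x) powr (c - of_nat 1) * (0 - 1)) / c) (at x)"
      unfolding G_def by (intro derivative_eq_intros DERIV_fun_powr) (use xp c in auto)
    moreover have "- (c * (T - x) powr (c - of_nat 1) * (0 - 1)) / c = (T - x) powr (c - 1)"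
      using c by simp
    ultimately show "(G has_vector_derivative (T - x) powr (c - 1)) (at x)"
      by (simp add: has_real_derivative_iff_has_vector_derivative)
  qed (use T in auto)
  thus ?thesis by (simp add: G_def)
qed

lemma main_bound:
  fixes c k T :: real and n :: nat
  assumes c0: "0 < c" and c1: "c < 1" and k: "0 < k" and n: "1 \<le> n" and Tdef: "T = real (n+1) * k"
  defines "F \<equiv> (\<lambda>x. (T - x) powr (c - 1) * \<bar>pl_interp k (\<lambda>s. s powr (1 - c)) x - x powr (1 - c)\<bar>)"
  shows "F integrable_on {0..T} \<and> integral {0..T} F \<le> 54 / c * k powr (2 - c) * (T - k) powr (c - 1)"
proof -
  define D where "D = T - k"
  have Dn: "D = real n * k" unfolding D_def Tdef by (simp add: algebra_simps)
  have kD: "k \<le> D" unfolding Dn using n k by simp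
  have Dpos: "0 < D" using kD k by simp
  have TD: "D < T" unfolding D_def using k by simp
  have Tpos: "0 < T" using TD Dpos by simp
  have T2k: "2 * k \<le> T" using kD unfolding D_def by simp
  define A where "A = (T / 2) powr (c - 1)"
  define B where "B = 9 * k^2 * (T / 2 + k) powr (-1 - c)"
  define H where "H = (\<lambda>x. A * (9 * k^2) * (x + k) powr (-1 - c) + B * (T - x) powr (c - 1))"
  define IH where "IH = A * (9 * k^2) * ((k powr (- c) - (T + k) powr (- c)) / c) + B * (T powr c / c)"
  have A0: "0 \<le> A" unfolding A_def by simp
  have B0: "0 \<le> B" unfolding B_def by simp
  have Hint: "(H has_integral IH) {0..T}"
    unfolding H_def IH_def
    by (intro has_integral_add has_integral_mult_right int1 int2) (use k c0 Tpos in auto)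
  have bound: "\<bar>F x\<bar> \<le> H x" if x: "x \<in> {0..T}" for x
  proof -
    define E where "E = \<bar>pl_interp k (\<lambda>s. s powr (1 - c)) x - x powr (1 - c)\<bar>"
    define M where "M = 9 * k^2 * (x + k) powr (-1 - c)"
    define G where "G = (T - x) powr (c - 1)"
    have EM: "E \<le> M" unfolding E_def M_def using interp_err[of k c x] k c0 c1 x by simp
    have E0: "0 \<le> E" unfolding E_def by simp
    have G0: "0 \<le> G" unfolding G_def by simp
    have F: "\<bar>F x\<bar> = G * E" unfolding F_def G_def E_def by simp
    have H: "H x = A * M + B * G" unfolding H_def M_def G_def by (simp add: mult.assoc)
    have GE: "G * E \<le> G * M" using EM G0 by (intro mult_left_mono)
    show ?thesis
    proof (cases "x \<le> T / 2")
      case True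
      have "G \<le> A" unfolding G_def A_def using True Tpos c1 by (intro powr_mono2') auto
      hence "G * M \<le> A * M" unfolding M_def by (intro mult_right_mono) auto
      moreover have "0 \<le> B * G" using B0 G0 by simp
      ultimately show ?thesis using F H GE by linarith
    next
      case False
      have "(x + k) powr (-1 - c) \<le> (T / 2 + k) powr (-1 - c)"
        using False Tpos k c0 by (intro powr_mono2') auto
      hence "M \<le> B" unfolding M_def B_def by (intro mult_left_mono) auto
      hence "G * M \<le> G * B" using G0 by (intro mult_left_mono)
      hence "G * M \<le> B * G" by (simp add: mult.commute)
      moreover have "0 \<le> A * M" using A0 unfolding M_def by simp
      ultimately show ?thesis using F H GE by linarith
    qed
  qed
  have meas: "F \<in> borel_measurable (lebesgue_on {0..T})"
  proof -
    have "F \<in> borel_measurable borel" unfolding F_def pl_interp_def Let_def by measurable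
    thus ?thesis by (simp add: measurable_completion measurable_restrict_space1)
  qed
  have Fint: "F integrable_on {0..T}"
    by (rule measurable_bounded_by_integrable_imp_integrable_real[OF meas _ bound])
       (use Hint in auto)
  have "integral {0..T} F \<le> integral {0..T} H"
    by (rule integral_le[OF Fint]) (use Hint bound in \<open>auto simp: has_integral_integrable intro: abs_le_D1\<close>)
  also have "integral {0..T} H = IH" using Hint by (rule integral_unique)
  finally have FI: "integral {0..T} F \<le> IH" .
  define K where "K = k powr (2 - c) * D powr (c - 1)"
  have t1a: "A \<le> 2 * D powr (c - 1)"
  proof -
    have "A \<le> (D / 2) powr (c - 1)" unfolding A_def using TD Dpos c1 by (intro powr_mono2') auto
    also have "(D / 2) powr (c - 1) = D powr (c - 1) / 2 powr (c - 1)" using Dpos by (simp add: powr_divide)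
    also have "\<dots> \<le> D powr (c - 1) / (1 / 2)"
    proof (rule divide_left_mono)
      have "(2::real) powr (-1) \<le> 2 powr (c - 1)" using c0 by (intro powr_mono) auto
      thus "1 / 2 \<le> (2::real) powr (c - 1)" by (simp add: powr_minus)
    qed auto
    finally show ?thesis by simp
  qed
  have kk: "k^2 * k powr (- c) = k powr (2 - c)"
  proof -
    have "k powr (2 - c) = k powr 2 * k powr (- c)" using powr_add[of k 2 "- c"] by simp
    also have "k powr 2 = k^2" using k by (simp add: powr_numeral)
    finally show ?thesis by simp
  qed
  have term1: "A * (9 * k^2) * ((k powr (- c) - (T + k) powr (- c)) / c) \<le> 18 / c * K"
  proof -
    have "(k powr (- c) - (T + k) powr (- c)) / c \<le> k powr (- c) / c"
      using c0 by (intro divide_right_mono) auto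
    hence "A * (9 * k^2) * ((k powr (- c) - (T + k) powr (- c)) / c) \<le> A * (9 * k^2) * (k powr (- c) / c)"
      using A0 by (intro mult_left_mono) auto
    also have "\<dots> = 9 / c * A * (k^2 * k powr (- c))" by simp
    also have "\<dots> = 9 / c * A * k powr (2 - c)" using kk by simp
    also have "\<dots> \<le> 9 / c * (2 * D powr (c - 1)) * k powr (2 - c)"
      using t1a c0 by (intro mult_right_mono mult_left_mono) auto
    also have "\<dots> = 18 / c * K" unfolding K_def by simp
    finally show ?thesis .
  qed
  have term2: "B * (T powr c / c) \<le> 36 / c * K"
  proof -
    have b1: "(T / 2 + k) powr (-1 - c) \<le> 4 * T powr (-1 - c)"
    proof -
      have "(T / 2 + k) powr (-1 - c) \<le> (T / 2) powr (-1 - c)"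
        using Tpos k c0 by (intro powr_mono2') auto
      also have "(T / 2) powr (-1 - c) = T powr (-1 - c) / 2 powr (-1 - c)"
        using Tpos by (simp add: powr_divide)
      also have "\<dots> \<le> T powr (-1 - c) / (1 / 4)"
      proof (rule divide_left_mono)
        have "(2::real) powr (-2) \<le> 2 powr (-1 - c)" using c1 by (intro powr_mono) auto
        thus "1 / 4 \<le> (2::real) powr (-1 - c)" by (simp add: powr_minus powr_realpow)
      qed auto
      finally show ?thesis by simp
    qed
    have b2: "T powr (-1 - c) * T powr c = 1 / T"
      using Tpos by (simp add: powr_minus_divide flip: powr_add)
    have b3: "k^2 / T \<le> K"
    proof -
      have "k^2 = k powr (2 - c) * k powr c"
      proof -
        have "k powr 2 = k powr (2 - c) * k powr c" using powr_add[of k "2 - c" c] by simp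
        moreover have "k powr 2 = k^2" using k by (simp add: powr_numeral)
        ultimately show ?thesis by simp
      qed
      hence "k^2 / T = k powr (2 - c) * (k powr c / T)" by simp
      also have "k powr c / T \<le> D powr c / D"
      proof -
        have "k powr c \<le> D powr c" using kD k c0 by (intro powr_mono2) auto
        hence "k powr c / T \<le> D powr c / T" using Tpos by (intro divide_right_mono) auto
        also have "\<dots> \<le> D powr c / D" using TD Dpos by (intro divide_left_mono) auto
        finally show ?thesis .
      qed
      hence "k powr (2 - c) * (k powr c / T) \<le> k powr (2 - c) * (D powr c / D)"
        by (intro mult_left_mono) auto
      also have "D powr c / D = D powr (c - 1)" using Dpos by (simp add: powr_diff)
      finally show ?thesis unfolding K_def .
    qed
    have "B * (T powr c / c) = 9 / c * k^2 * ((T / 2 + k) powr (-1 - c) * T powr c)"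
      unfolding B_def by simp
    also have "\<dots> \<le> 9 / c * k^2 * ((4 * T powr (-1 - c)) * T powr c)"
      using b1 c0 by (intro mult_left_mono mult_right_mono) auto
    also have "\<dots> = 36 / c * (k^2 / T)" using b2 by (simp add: mult.assoc)
    also have "\<dots> \<le> 36 / c * K" using b3 c0 by (intro mult_left_mono) auto
    finally show ?thesis .
  qed
  have "IH \<le> 54 / c * K" unfolding IH_def using term1 term2 by simp
  hence "integral {0..T} F \<le> 54 / c * K" using FI by linarith
  thus ?thesis using Fint unfolding K_def D_def by (simp add: mult.assoc)
qed

theorem lemma5p5:
  fixes \<beta> :: real
  assumes "0 < \<beta>" "\<beta> < 1"
  shows "\<exists>C. \<forall>\<kappa>>0. \<forall>n::nat. n \<ge> 1 \<longrightarrow>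
    ((\<lambda>\<tau>. (real (n+1) * \<kappa> - \<tau>) powr (\<beta> - 1) *
          \<bar>pl_interp \<kappa> (\<lambda>s. s powr (1 - \<beta>)) \<tau> - \<tau> powr (1 - \<beta>)\<bar>)
       integrable_on {0..real (n+1) * \<kappa>}) \<and>
    integral {0..real (n+1) * \<kappa>}
      (\<lambda>\<tau>. (real (n+1) * \<kappa> - \<tau>) powr (\<beta> - 1) *
          \<bar>pl_interp \<kappa> (\<lambda>s. s powr (1 - \<beta>)) \<tau> - \<tau> powr (1 - \<beta>)\<bar>)
    \<le> C * \<kappa> powr (2 - \<beta>) * (real (n+1) * \<kappa> - \<kappa>) powr (\<beta> - 1)"
proof (intro exI[of _ "54 / \<beta>"] allI impI)
  fix \<kappa> :: real and n :: nat
  assume "0 < \<kappa>" "1 \<le> n"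
  from main_bound[OF assms this refl] show "((\<lambda>\<tau>. (real (n+1) * \<kappa> - \<tau>) powr (\<beta> - 1) *
          \<bar>pl_interp \<kappa> (\<lambda>s. s powr (1 - \<beta>)) \<tau> - \<tau> powr (1 - \<beta>)\<bar>)
       integrable_on {0..real (n+1) * \<kappa>}) \<and>
    integral {0..real (n+1) * \<kappa>}
      (\<lambda>\<tau>. (real (n+1) * \<kappa> - \<tau>) powr (\<beta> - 1) *
          \<bar>pl_interp \<kappa> (\<lambda>s. s powr (1 - \<beta>)) \<tau> - \<tau> powr (1 - \<beta>)\<bar>)
    \<le> 54 / \<beta> * \<kappa> powr (2 - \<beta>) * (real (n+1) * \<kappa> - \<kappa>) powr (\<beta> - 1)"
    by simp
qed

end
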